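(* Let $(X_1,Y_1),\dots,(X_n,Y_n)$ be calibration data and $X_{n+1},\dots,X_{n+m}$ test covariates (with unobserved $Y_{n+j}$), $Y_i\in\mathbb{R}$, $s:\mathcal{X}\to[0,1]$ a score, $c\in\mathbb{R}$ a constant, and suppose the risk is binary: $\mathcal{L}(f,x,y)=\mathbf{1}\{y\le c\}$, $L_i=\mathbf{1}\{Y_i\le c\}$. Fix $\alpha\in(0,1)$ and take $\gamma=\alpha$ in the SCoRE e-values. Then for every $j\in\{1,\dots,m\}$, deterministically $E_{\alpha,n+j}(1)\ge e_{n+j}$; furthermore, $e_{n+j}=0$ implies $E_{\alpha,n+j}=0$.
   Context: Let $\mathcal{M}=\{s(X_i)\}_{i=1}^{n+m}$. For $t\in\mathbb{R}$, $\ell\in[0,1]$: $\mathrm{FR}_{n+j}(t;\ell)=\frac{\ell\mathbf{1}\{s(X_{n+j})\le t\}+\sum_{i=1}^nL_i\mathbf{1}\{s(X_i)\le t\}}{1+\sum_{k\ne j}\mathbf{1}\{s(X_{n+k})\le t\}}\cdot\frac{m}{n+1}$, $t_{\gamma,n+j}(\ell)=\max\{t\in\mathcal{M}:\mathrm{FR}_{n+j}(t;\ell)\le\gamma\}$ ($\max\emptyset=-\infty$), $$E_{\gamma,n+j}(\ell)=\frac{(n+1)\mathbf{1}\{s(X_{n+j})\le t_{\gamma,n+j}(\ell)\}}{\ell\mathbf{1}\{s(X_{n+j})\le t_{\gamma,n+j}(\ell)\}+\sum_{i=1}^nL_i\mathbf{1}\{s(X_i)\le t_{\gamma,n+j}(\ell)\}}$$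 (ratio $0$ if numerator $0$), and $E_{\gamma,n+j}=\inf_{\ell\in[0,1]}E_{\gamma,n+j}(\ell)$ (set to $0$ if $\inf_\ell t_{\gamma,n+j}(\ell)=-\infty$). Conformal p-values: with $V(x,y)=\infty\cdot\mathbf{1}\{y>c\}+s(x)$ (where $\infty\cdot0=0$), $p_j=\frac{1+\sum_{i=1}^n\mathbf{1}\{V(X_i,Y_i)\le V(X_{n+j},c)\}}{n+1}$. Let $\mathcal{S}^{\mathrm{CS}}$ be the output of the Benjamini–Hochberg procedure at level $\alpha$ applied to $p_1,\dots,p_m$ (i.e. with $k^*=\max\{k:p_{(k)}\le\alpha k/m\}$, or $0$ if none, $\mathcal{S}^{\mathrm{CS}}=\{j:p_j\le\alpha k^*/m\}$), and $e_{n+j}=\frac{\mathbf{1}\{p_j\le\alpha|\mathcal{S}^{\mathrm{CS}}|/m\}}{\alpha|\mathcal{S}^{\mathrm{CS}}|/m}$ (taken as $0$ when the indicator is $0$). *)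

theory Defs
  imports Complex_Main "HOL-Library.Extended_Real"
begin

definition ind :: "bool \<Rightarrow> real" where
  "ind b = (if b then 1 else 0)"

definition scoreset :: "nat \<Rightarrow> nat \<Rightarrow> (nat \<Rightarrow> 'x) \<Rightarrow> ('x \<Rightarrow> real) \<Rightarrow> real set" where
  "scoreset n m X s = (\<lambda>i. s (X i)) ` {1..n+m}"

definition FR :: "nat \<Rightarrow> nat \<Rightarrow> (nat \<Rightarrow> 'x) \<Rightarrow> (nat \<Rightarrow> real) \<Rightarrow> ('x \<Rightarrow> real)
                   \<Rightarrow> nat \<Rightarrow> real \<Rightarrow> real \<Rightarrow> real" where
  "FR n m X L s j t l =
     (l * ind (s (X (n+j)) \<le> t) + (\<Sum>i=1..n. L i * ind (s (X i) \<le> t)))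
     / (1 + real (card {k\<in>{1..m}. k \<noteq> j \<and> s (X (n+k)) \<le> t}))
     * (real m / real (n+1))"

definition thr :: "nat \<Rightarrow> nat \<Rightarrow> (nat \<Rightarrow> 'x) \<Rightarrow> (nat \<Rightarrow> real) \<Rightarrow> ('x \<Rightarrow> real)
                   \<Rightarrow> real \<Rightarrow> nat \<Rightarrow> real \<Rightarrow> ereal" where
  "thr n m X L s \<gamma> j l =
     (let A = {t \<in> scoreset n m X s. FR n m X L s j t l \<le> \<gamma>}
      in if A = {} then -\<infinity> else ereal (Max A))"

text \<open>E_{gamma,n+j}(l); ratio 0 when the numerator is 0\<close>
definition Eell :: "nat \<Rightarrow> nat \<Rightarrow> (nat \<Rightarrow> 'x) \<Rightarrow> (nat \<Rightarrow> real) \<Rightarrow> ('x \<Rightarrow> real)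
                   \<Rightarrow> real \<Rightarrow> nat \<Rightarrow> real \<Rightarrow> real" where
  "Eell n m X L s \<gamma> j l =
     (let T = thr n m X L s \<gamma> j l
      in if ereal (s (X (n+j))) \<le> T
         then real (n+1) / (l * ind (ereal (s (X (n+j))) \<le> T)
                            + (\<Sum>i=1..n. L i * ind (ereal (s (X i)) \<le> T)))
         else 0)"

definition Eval :: "nat \<Rightarrow> nat \<Rightarrow> (nat \<Rightarrow> 'x) \<Rightarrow> (nat \<Rightarrow> real) \<Rightarrow> ('x \<Rightarrow> real)
                   \<Rightarrow> real \<Rightarrow> nat \<Rightarrow> real" where
  "Eval n m X L s \<gamma> j =
     (if (INF l\<in>{0..1::real}. thr n m X L s \<gamma> j l) = -\<infinity> then 0
      else (INF l\<in>{0..1::real}. Eell n m X L s \<gamma> j l))"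

text \<open>Nonconformity score V(x,y) = infinity * 1{y > c} + s(x), with infinity * 0 = 0\<close>
definition Vscore :: "('x \<Rightarrow> real) \<Rightarrow> real \<Rightarrow> 'x \<Rightarrow> real \<Rightarrow> ereal" where
  "Vscore s c x y = (if y > c then \<infinity> else 0) + ereal (s x)"

definition pval :: "nat \<Rightarrow> (nat \<Rightarrow> 'x) \<Rightarrow> (nat \<Rightarrow> real) \<Rightarrow> ('x \<Rightarrow> real) \<Rightarrow> real
                   \<Rightarrow> nat \<Rightarrow> real" where
  "pval n X Y s c j =
     (1 + real (card {i\<in>{1..n}. Vscore s c (X i) (Y i) \<le> Vscore s c (X (n+j)) c}))
     / real (n+1)"

definition BH_kstar :: "real \<Rightarrow> nat \<Rightarrow> (nat \<Rightarrow> real) \<Rightarrow> nat" where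
  "BH_kstar \<alpha> m p =
     (let ps = sort (map p [1..<m+1]);
          K = {k\<in>{1..m}. ps ! (k-1) \<le> \<alpha> * real k / real m}
      in if K = {} then 0 else Max K)"

definition BH_sel :: "real \<Rightarrow> nat \<Rightarrow> (nat \<Rightarrow> real) \<Rightarrow> nat set" where
  "BH_sel \<alpha> m p = {j\<in>{1..m}. p j \<le> \<alpha> * real (BH_kstar \<alpha> m p) / real m}"

definition eBH :: "real \<Rightarrow> nat \<Rightarrow> (nat \<Rightarrow> real) \<Rightarrow> nat \<Rightarrow> real" where
  "eBH \<alpha> m p j =
     (let r = \<alpha> * real (card (BH_sel \<alpha> m p)) / real m
      in if p j \<le> r then 1 / r else 0)"

end

theory Submission imports Defs begin

lemma sorted_nth_le_iff:
  fixes xs :: "real list"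
  assumes "sorted xs" "1 \<le> N" "N \<le> length xs"
  shows "(xs!(N-1) \<le> x) \<longleftrightarrow> N \<le> length (filter (\<lambda>y. y \<le> x) xs)"
proof
  assume h: "xs!(N-1) \<le> x"
  have "{0..<N} \<subseteq> {i. i < length xs \<and> xs!i \<le> x}"
  proof
    fix i assume "i \<in> {0..<N}"
    then have "xs!i \<le> xs!(N-1)" using assms by (intro sorted_nth_mono) auto
    then show "i \<in> {i. i < length xs \<and> xs!i \<le> x}" using h \<open>i \<in> {0..<N}\<close> assms by auto
  qed
  then have "card {0..<N} \<le> card {i. i < length xs \<and> xs!i \<le> x}"
    by (intro card_mono) auto
  then show "N \<le> length (filter (\<lambda>y. y \<le> x) xs)" by (simp add: length_filter_conv_card)
next
  assume h: "N \<le> length (filter (\<lambda>y. y \<le> x) xs)"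
  show "xs!(N-1) \<le> x"
  proof (rule ccontr)
    assume "\<not> xs!(N-1) \<le> x"
    have "{i. i < length xs \<and> xs!i \<le> x} \<subseteq> {0..<N-1}"
    proof
      fix i assume i: "i \<in> {i. i < length xs \<and> xs!i \<le> x}"
      show "i \<in> {0..<N-1}"
      proof (rule ccontr)
        assume "i \<notin> {0..<N-1}"
        then have "xs!(N-1) \<le> xs!i" using assms i by (intro sorted_nth_mono) auto
        then show False using i \<open>\<not> xs!(N-1) \<le> x\<close> by auto
      qed
    qed
    then have "card {i. i < length xs \<and> xs!i \<le> x} \<le> card {0..<N-1}"
      by (intro card_mono) auto
    then show False using h assms by (simp add: length_filter_conv_card)
  qed
qed

lemma cnt_sort:
  "length (filter (\<lambda>y. y \<le> x) (sort (map (p::nat\<Rightarrow>real) [1..<m+1])))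
     = card {k\<in>{1..m}. p k \<le> x}"
proof -
  have "length (filter (\<lambda>y. y \<le> x) (sort (map p [1..<m+1])))
      = length (filter (\<lambda>y. y \<le> x) (map p [1..<m+1]))"
    by (simp add: filter_sort)
  also have "\<dots> = length (filter (\<lambda>k. p k \<le> x) [1..<m+1])"
    by (simp add: filter_map comp_def del: upt_Suc)
  also have "\<dots> = card ({k. p k \<le> x} \<inter> set [1..<m+1])"
    by (rule distinct_length_filter) simp
  also have "{k. p k \<le> x} \<inter> set [1..<m+1] = {k\<in>{1..m}. p k \<le> x}" by auto
  finally show ?thesis .
qed

lemma BH_ps_iff:
  assumes "k \<in> {1..m}"
  shows "(sort (map (p::nat\<Rightarrow>real) [1..<m+1]) ! (k-1) \<le> x) \<longleftrightarrow> k \<le> card {k\<in>{1..m}. p k \<le> x}"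
  using sorted_nth_le_iff[of "sort (map p [1..<m+1])" k x] assms cnt_sort[of x p m]
  by simp

lemma BH1:
  assumes "k \<in> {1..m}" "k \<le> card {i\<in>{1..m}. p i \<le> \<alpha> * real k / real m}"
  shows "k \<le> BH_kstar \<alpha> m p"
proof -
  let ?K = "{k\<in>{1..m}. sort (map p [1..<m+1]) ! (k-1) \<le> \<alpha> * real k / real m}"
  have "k \<in> ?K" using assms BH_ps_iff[OF assms(1), of p] by auto
  then have "k \<le> Max ?K" by (intro Max_ge) auto
  then show ?thesis using \<open>k \<in> ?K\<close> unfolding BH_kstar_def Let_def by auto
qed

lemma BH2:
  assumes "BH_kstar \<alpha> m p > 0"
  shows "BH_kstar \<alpha> m p \<le> card (BH_sel \<alpha> m p)"
proof -
  let ?K = "{k\<in>{1..m}. sort (map p [1..<m+1]) ! (k-1) \<le> \<alpha> * real k / real m}"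
  have ne: "?K \<noteq> {}" using assms unfolding BH_kstar_def Let_def by (auto split: if_splits)
  then have eq: "BH_kstar \<alpha> m p = Max ?K" unfolding BH_kstar_def Let_def by auto
  have "Max ?K \<in> ?K" using ne by (intro Max_in) auto
  then have "BH_kstar \<alpha> m p \<in> ?K" by (subst eq)
  then have k1: "BH_kstar \<alpha> m p \<in> {1..m}" and
    k2: "sort (map p [1..<m+1]) ! (BH_kstar \<alpha> m p - 1) \<le> \<alpha> * real (BH_kstar \<alpha> m p) / real m"
    by blast+
  show ?thesis using BH_ps_iff[OF k1, of p] k2 unfolding BH_sel_def by blast
qed

lemma BH0:
  assumes "BH_kstar \<alpha> m p = 0" "\<forall>k. p k > 0"
  shows "BH_sel \<alpha> m p = {}"
  using assms unfolding BH_sel_def by (auto simp: not_le)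


definition aa :: "nat \<Rightarrow> (nat \<Rightarrow> 'x) \<Rightarrow> (nat \<Rightarrow> real) \<Rightarrow> ('x \<Rightarrow> real) \<Rightarrow> real \<Rightarrow> real" where
  "aa n X L s t = (\<Sum>i=1..n. L i * ind (s (X i) \<le> t))"

definition Nt :: "nat \<Rightarrow> nat \<Rightarrow> (nat \<Rightarrow> 'x) \<Rightarrow> ('x \<Rightarrow> real) \<Rightarrow> real \<Rightarrow> nat" where
  "Nt n m X s t = card {k\<in>{1..m}. s (X (n+k)) \<le> t}"

lemma sum_ind_card: "(\<Sum>i\<in>A. ind (P i)) = real (card {i\<in>A. P i})" if "finite A"
  using that by (simp add: ind_def sum.If_cases Int_def)

lemma pval_eq:
  "pval n X Y s c k = (1 + aa n X (\<lambda>i. ind (Y i \<le> c)) s (s (X (n+k)))) / real (n+1)"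
proof -
  have "{i\<in>{1..n}. Vscore s c (X i) (Y i) \<le> Vscore s c (X (n+k)) c}
      = {i\<in>{1..n}. Y i \<le> c \<and> s (X i) \<le> s (X (n+k))}"
    by (auto simp: Vscore_def)
  moreover have "aa n X (\<lambda>i. ind (Y i \<le> c)) s (s (X (n+k)))
      = (\<Sum>i=1..n. ind (Y i \<le> c \<and> s (X i) \<le> s (X (n+k))))"
    unfolding aa_def by (intro sum.cong) (auto simp: ind_def)
  ultimately show ?thesis unfolding pval_def by (simp add: sum_ind_card)
qed

lemma pval_pos: "pval n X Y s c k > 0"
proof -
  have "aa n X (\<lambda>i. ind (Y i \<le> c)) s t \<ge> 0" for t
    unfolding aa_def by (intro sum_nonneg) (auto simp: ind_def)
  then show ?thesis unfolding pval_eq by (intro divide_pos_pos) (auto simp: add_pos_nonneg)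
qed

lemma aa_mono:
  assumes "t \<le> t'" "\<forall>i. L i \<ge> 0"
  shows "aa n X L s t \<le> aa n X L s t'"
  unfolding aa_def using assms by (intro sum_mono mult_left_mono) (auto simp: ind_def)

lemma FR_eq:
  assumes "j \<in> {1..m}" "s (X (n+j)) \<le> t"
  shows "FR n m X L s j t 1 = (1 + aa n X L s t) / real (Nt n m X s t) * (real m / real (n+1))"
proof -
  have "{k\<in>{1..m}. s (X (n+k)) \<le> t} = insert j {k\<in>{1..m}. k \<noteq> j \<and> s (X (n+k)) \<le> t}"
    using assms by auto
  then have "Nt n m X s t = Suc (card {k\<in>{1..m}. k \<noteq> j \<and> s (X (n+k)) \<le> t})"
    unfolding Nt_def by simp
  then show ?thesis unfolding FR_def aa_def using assms by (simp add: ind_def)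
qed

lemma Nt_pos:
  assumes "j \<in> {1..m}" "s (X (n+j)) \<le> t"
  shows "1 \<le> Nt n m X s t" "Nt n m X s t \<le> m"
proof -
  have "j \<in> {k\<in>{1..m}. s (X (n+k)) \<le> t}" using assms by auto
  moreover have "finite {k\<in>{1..m}. s (X (n+k)) \<le> t}" by simp
  ultimately have "card {k\<in>{1..m}. s (X (n+k)) \<le> t} > 0" by (metis card_gt_0_iff empty_iff)
  then show "1 \<le> Nt n m X s t" unfolding Nt_def by simp
  have "card {k\<in>{1..m}. s (X (n+k)) \<le> t} \<le> card {1..m}" by (intro card_mono) auto
  then show "Nt n m X s t \<le> m" unfolding Nt_def by simp
qed

lemma KL:
  fixes \<alpha> :: real
  assumes apos: "0 < \<alpha>" and j: "j \<in> {1..m}" and sj: "s (X (n+j)) \<le> t"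
    and b: "1 + aa n X (\<lambda>i. ind (Y i \<le> c)) s t \<le> \<alpha> * real (n+1) * real (Nt n m X s t) / real m"
  shows "Nt n m X s t \<le> card (BH_sel \<alpha> m (pval n X Y s c))
     \<and> pval n X Y s c j \<le> \<alpha> * real (card (BH_sel \<alpha> m (pval n X Y s c))) / real m"
proof -
  let ?p = "pval n X Y s c" and ?N = "Nt n m X s t" and ?L = "\<lambda>i. ind (Y i \<le> c)"
  let ?S = "BH_sel \<alpha> m ?p"
  have Lnn: "\<forall>i. ?L i \<ge> 0" by (simp add: ind_def)
  have N1: "1 \<le> ?N" "?N \<le> m" using Nt_pos[of j m s X n t] j sj by auto
  have sub: "{k\<in>{1..m}. s (X (n+k)) \<le> t} \<subseteq> {k\<in>{1..m}. ?p k \<le> \<alpha> * real ?N / real m}"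
  proof safe
    fix k assume k: "k \<in> {1..m}" "s (X (n+k)) \<le> t"
    have "?p k = (1 + aa n X ?L s (s (X (n+k)))) / real (n+1)" by (rule pval_eq)
    also have "\<dots> \<le> (1 + aa n X ?L s t) / real (n+1)"
      using aa_mono[OF k(2) Lnn] by (intro divide_right_mono) auto
    also have "\<dots> \<le> (\<alpha> * real (n+1) * real ?N / real m) / real (n+1)"
      using b by (intro divide_right_mono) auto
    also have "\<dots> = \<alpha> * real ?N / real m" by simp
    finally show "?p k \<le> \<alpha> * real ?N / real m" .
  qed
  have c1: "?N \<le> card {k\<in>{1..m}. ?p k \<le> \<alpha> * real ?N / real m}"
    unfolding Nt_def by (rule card_mono[OF _ sub[unfolded Nt_def]]) auto
  have "?N \<le> BH_kstar \<alpha> m ?p" using N1 c1 by (intro BH1) auto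
  then have ks: "BH_kstar \<alpha> m ?p > 0" "?N \<le> BH_kstar \<alpha> m ?p" using N1 by auto
  have "{k\<in>{1..m}. ?p k \<le> \<alpha> * real ?N / real m} \<subseteq> ?S"
  proof safe
    fix k assume k: "k \<in> {1..m}" "?p k \<le> \<alpha> * real ?N / real m"
    have "\<alpha> * real ?N / real m \<le> \<alpha> * real (BH_kstar \<alpha> m ?p) / real m"
      using ks apos by (intro divide_right_mono mult_left_mono) auto
    then show "k \<in> ?S" using k unfolding BH_sel_def by auto
  qed
  then have "card {k\<in>{1..m}. ?p k \<le> \<alpha> * real ?N / real m} \<le> card ?S"
    by (intro card_mono) (auto simp: BH_sel_def)
  with c1 have NS: "?N \<le> card ?S" by simp
  have "j \<in> {k\<in>{1..m}. ?p k \<le> \<alpha> * real ?N / real m}" using sub j sj by auto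
  then have "?p j \<le> \<alpha> * real ?N / real m" by simp
  also have "\<dots> \<le> \<alpha> * real (card ?S) / real m"
    using NS apos by (intro divide_right_mono mult_left_mono) auto
  finally show ?thesis using NS by simp
qed

lemma Eell_nonneg:
  assumes "l \<ge> 0" "\<forall>i. L i \<ge> 0"
  shows "Eell n m X L s \<gamma> j l \<ge> 0"
  unfolding Eell_def Let_def using assms
  by (auto intro!: divide_nonneg_nonneg add_nonneg_nonneg sum_nonneg simp: ind_def)


theorem proposition5p2:
  fixes n m :: nat and X :: "nat \<Rightarrow> 'x" and Y :: "nat \<Rightarrow> real"
    and s :: "'x \<Rightarrow> real" and c \<alpha> :: real
  assumes s_range: "\<forall>x. 0 \<le> s x \<and> s x \<le> 1"
    and alpha_pos: "0 < \<alpha>" and alpha_lt1: "\<alpha> < 1"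
  shows "\<forall>j\<in>{1..m}.
           Eell n m X (\<lambda>i. ind (Y i \<le> c)) s \<alpha> j 1 \<ge> eBH \<alpha> m (pval n X Y s c) j
         \<and> (eBH \<alpha> m (pval n X Y s c) j = 0 \<longrightarrow> Eval n m X (\<lambda>i. ind (Y i \<le> c)) s \<alpha> j = 0)"
proof
  fix j assume j: "j \<in> {1..m}"
  define L where "L = (\<lambda>i. ind (Y i \<le> c))"
  define p where "p = pval n X Y s c"
  define S where "S = BH_sel \<alpha> m p"
  define A where "A = {t \<in> scoreset n m X s. FR n m X L s j t 1 \<le> \<alpha>}"
  define e where "e = eBH \<alpha> m p j"
  have Lnn: "\<forall>i. L i \<ge> 0" by (simp add: L_def ind_def)
  have m0: "real m > 0" using j by auto
  have finA: "finite A" unfolding A_def scoreset_def by simp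
  have thr_eq: "thr n m X L s \<alpha> j 1 = (if A = {} then -\<infinity> else ereal (Max A))"
    unfolding thr_def A_def Let_def by simp
  have e_eq: "e = (if p j \<le> \<alpha> * real (card S) / real m then 1 / (\<alpha> * real (card S) / real m) else 0)"
    unfolding e_def eBH_def S_def Let_def by simp
  show "Eell n m X L s \<alpha> j 1 \<ge> e \<and> (e = 0 \<longrightarrow> Eval n m X L s \<alpha> j = 0)"
  proof (cases "A \<noteq> {} \<and> s (X (n+j)) \<le> Max A")
    case True
    define t where "t = Max A"
    have tA: "t \<in> A" using True finA unfolding t_def by (intro Max_in) auto
    have sj: "s (X (n+j)) \<le> t" using True t_def by simp
    have thr: "thr n m X L s \<alpha> j 1 = ereal t" using thr_eq True t_def by simp
    let ?N = "Nt n m X s t"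
    have N1: "1 \<le> ?N" using Nt_pos[of j m s X n t] j sj by auto
    have FRt: "(1 + aa n X L s t) / real ?N * (real m / real (n+1)) \<le> \<alpha>"
      using tA FR_eq[where j=j and m=m and s=s and X=X and n=n and t=t and L=L] j sj unfolding A_def by simp
    have apos: "1 + aa n X L s t > 0"
      unfolding aa_def using Lnn by (intro add_pos_nonneg sum_nonneg) (auto simp: ind_def)
    have b: "1 + aa n X L s t \<le> \<alpha> * real (n+1) * real ?N / real m"
    proof -
      have D: "real ?N * real (n+1) > 0" using N1 by simp
      have "(1 + aa n X L s t) / real ?N * (real m / real (n+1))
          = ((1 + aa n X L s t) * real m) / (real ?N * real (n+1))" by simp
      then have "((1 + aa n X L s t) * real m) / (real ?N * real (n+1)) \<le> \<alpha>" using FRt by simp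
      then have "(1 + aa n X L s t) * real m \<le> \<alpha> * (real ?N * real (n+1))"
        using pos_divide_le_eq[OF D] by simp
      then show ?thesis using m0 by (simp add: field_simps)
    qed
    from KL[where j=j and m=m and s=s and X=X and n=n and t=t and Y=Y and c=c, OF alpha_pos j sj b[unfolded L_def]]
    have NS: "?N \<le> card S" and pj: "p j \<le> \<alpha> * real (card S) / real m"
      unfolding S_def p_def by auto
    have Spos: "real (card S) > 0" using NS N1 by simp
    have e1: "e = real m / (\<alpha> * real (card S))" using e_eq pj by simp
    have E1: "Eell n m X L s \<alpha> j 1 = real (n+1) / (1 + aa n X L s t)"
      unfolding Eell_def Let_def thr aa_def using sj by (simp add: ind_def)
    have "1 + aa n X L s t \<le> \<alpha> * real (n+1) * real (card S) / real m"
      using b NS alpha_pos m0 by (smt (verit, ccfv_SIG) divide_right_mono mult_left_mono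
          of_nat_0_le_iff of_nat_mono zero_le_mult_iff)
    then have "real m / (\<alpha> * real (card S)) \<le> real (n+1) / (1 + aa n X L s t)"
      using apos alpha_pos m0 Spos by (simp add: field_simps)
    moreover have "e \<noteq> 0" using e1 m0 alpha_pos Spos by simp
    ultimately show ?thesis using E1 e1 by simp
  next
    case False
    have E1: "Eell n m X L s \<alpha> j 1 = 0"
      using False unfolding Eell_def Let_def thr_eq by auto
    have e0: "e = 0"
    proof (rule ccontr)
      assume "e \<noteq> 0"
      then have pj: "p j \<le> \<alpha> * real (card S) / real m" and r0: "card S \<noteq> 0"
        using e_eq by (auto split: if_splits)
      have ppos: "\<forall>k. p k > 0" unfolding p_def using pval_pos by blast
      have "BH_kstar \<alpha> m p \<noteq> 0" using BH0[of \<alpha> m p] ppos r0 unfolding S_def by (metis card.empty)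
      then have ks: "BH_kstar \<alpha> m p \<le> card S" using BH2[of \<alpha> m p] unfolding S_def by auto
      define Q where "Q = {k\<in>{1..m}. p k \<le> \<alpha> * real (card S) / real m}"
      have jQ: "j \<in> Q" using j pj Q_def by simp
      have SQ: "S \<subseteq> Q"
      proof
        fix k assume "k \<in> S"
        then have k: "k \<in> {1..m}" "p k \<le> \<alpha> * real (BH_kstar \<alpha> m p) / real m"
          unfolding S_def BH_sel_def by auto
        have "\<alpha> * real (BH_kstar \<alpha> m p) / real m \<le> \<alpha> * real (card S) / real m"
          using ks alpha_pos by (intro divide_right_mono mult_left_mono) auto
        then show "k \<in> Q" using k Q_def by simp
      qed
      have finQ: "finite Q" unfolding Q_def by simp
      define t' where "t' = Max ((\<lambda>k. s (X (n+k))) ` Q)"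
      have "t' \<in> (\<lambda>k. s (X (n+k))) ` Q" unfolding t'_def using jQ finQ by (intro Max_in) auto
      then obtain k0 where k0: "k0 \<in> Q" "t' = s (X (n+k0))" by auto
      have le_t': "s (X (n+k)) \<le> t'" if "k \<in> Q" for k
        unfolding t'_def using that finQ by (intro Max_ge) auto
      have sj: "s (X (n+j)) \<le> t'" using le_t' jQ .
      have t'M: "t' \<in> scoreset n m X s"
        unfolding scoreset_def using k0 Q_def by (auto intro!: image_eqI[where x="n+k0"])
      have "p k0 = (1 + aa n X L s t') / real (n+1)"
        unfolding p_def pval_eq L_def k0(2) ..
      then have "1 + aa n X L s t' = real (n+1) * p k0" by simp
      moreover have "p k0 \<le> \<alpha> * real (card S) / real m" using k0(1) Q_def by simp
      ultimately have a1: "1 + aa n X L s t' \<le> real (n+1) * (\<alpha> * real (card S) / real m)"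
        by (metis mult_left_mono of_nat_0_le_iff)
      let ?N = "Nt n m X s t'"
      have "Q \<subseteq> {k\<in>{1..m}. s (X (n+k)) \<le> t'}" using le_t' Q_def by auto
      then have "card Q \<le> ?N" unfolding Nt_def by (intro card_mono) auto
      moreover have "card S \<le> card Q" using SQ finQ by (intro card_mono) auto
      ultimately have NS: "card S \<le> ?N" by simp
      have Sp: "real (card S) > 0" using r0 by simp
      have "FR n m X L s j t' 1 = (1 + aa n X L s t') / real ?N * (real m / real (n+1))"
        using FR_eq[where j=j and m=m and s=s and X=X and n=n and t=t' and L=L] j sj by simp
      also have "\<dots> \<le> (real (n+1) * (\<alpha> * real (card S) / real m)) / real ?N * (real m / real (n+1))"
        using a1 m0 by (intro mult_right_mono divide_right_mono) auto
      also have "\<dots> = \<alpha> * real (card S) / real ?N"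
      proof -
        have "real ?N > 0" using Nt_pos[of j m s X n t'] j sj by simp
        have gen: "(a * (x / b)) / N * (b / a) = x / N" if "a > 0" "b > 0" for a b x N :: real
          using that by (simp add: field_simps)
        show ?thesis using gen[of "real (n+1)" "real m" "\<alpha> * real (card S)" "real ?N"] m0 by simp
      qed
      also have "\<dots> \<le> \<alpha>" using NS Sp alpha_pos by (simp add: field_simps)
      finally have "t' \<in> A" unfolding A_def using t'M by simp
      then have "A \<noteq> {}" "t' \<le> Max A" using finA by auto
      then show False using False sj by auto
    qed
    have "Eval n m X L s \<alpha> j = 0"
    proof -
      have "(INF l\<in>{0..1::real}. Eell n m X L s \<alpha> j l) = 0"
      proof (rule antisym)
        have "(INF l\<in>{0..1::real}. Eell n m X L s \<alpha> j l) \<le> Eell n m X L s \<alpha> j 1"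
          by (rule cINF_lower) (auto intro!: bdd_belowI2[where m=0] Eell_nonneg Lnn)
        then show "(INF l\<in>{0..1::real}. Eell n m X L s \<alpha> j l) \<le> 0" using E1 by simp
        show "0 \<le> (INF l\<in>{0..1::real}. Eell n m X L s \<alpha> j l)"
          by (rule cINF_greatest) (auto intro!: Eell_nonneg Lnn)
      qed
      then show ?thesis unfolding Eval_def by simp
    qed
    then show ?thesis using E1 e0 by simp
  qed
qed

end
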